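(* Let $M$ be a mechanism that is $\delta$-Pareto efficient in all equilibria, and let $k$ be a positive integer. Let $M^k$ be the mechanism which, on a collection $A$ of $n$ alternatives, acts as $M$ acting on the collection $k$-$UN(A)$ (i.e., the players use the signals of $M$ for the collection $k$-$UN(A)$, $M$ selects a random element of $k$-$UN(A)$, i.e. a $k$-uniform distribution, and the final index is drawn from it). Then $M^k$ is $(\delta+\frac1k)$-close to the Pareto frontier in all equilibria.
   Context: Two players bargain over a collection (multiset) $A=(a^j)_{j\in[n]}\subset[0,1]^2$, $a^j_i$ being player $i$'s utility. A mechanism $M=(M_n)_n$ specifies for each $n$ signal sets $\Sigma_1(n),\Sigma_2(n)$ and a map $f_n:\Sigma_1(n)\times\Sigma_2(n)\to\Delta([n])$; with risk-neutral players it induces a game $\Gamma_M(A)$ with expected-utility payoffs, and $NEO_M(A)$ denotes its set of pure Nash equilibrium outcomes (expected utility vectors). A $k$-uniform distribution over $[n]$ is the uniform distribution over a multiset of size $k$ from $[n]$; $k$-$UN(A)$ is the collection, indexed by the $k$-uniform distributions $\mu$, of the points $\mathbb{E}_{j\sim\mu}[a^j]$. An allocation $x$ is $\varepsilon$-Pareto efficient w.r.t. a collection $C$ if no $c\in C$ has $c_1>x_1+\varepsilon$ and $c_2>x_2+\varepsilon$; $M$ is $\varepsilon$-Pareto efficient in all equilibria if for every collection $C$ every $x\in NEO_M(C)$ is $\varepsilon$-Pareto efficient w.r.t. $C$. $x$ is $\varepsilon$-close to the Pareto frontier of $A$ if no $y\in\mathrm{conv}(A)$ has $y_1>x_1+\varepsilon$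 and $y_2>x_2+\varepsilon$; a mechanism is $\varepsilon$-close to the Pareto frontier in all equilibria if for every collection $A$ every $x\in NEO(A)$ is $\varepsilon$-close to the Pareto frontier of $A$. *)

theory Defs
  imports "HOL-Analysis.Analysis" "HOL-Library.Multiset"
begin

text \<open>A collection of n alternatives is a map A :: nat => real * real, A j = a^j for j < n,
  with all utilities in [0,1]. Collections are nonempty (Delta([0]) is empty).\<close>
definition collection :: "nat \<Rightarrow> (nat \<Rightarrow> real \<times> real) \<Rightarrow> bool" where
  "collection n A \<longleftrightarrow> n \<ge> 1 \<and> (\<forall>j<n. A j \<in> {0..1} \<times> {0..1})"

definition is_distrib :: "nat \<Rightarrow> (nat \<Rightarrow> real) \<Rightarrow> bool" where
  "is_distrib n p \<longleftrightarrow> (\<forall>j<n. p j \<ge> 0) \<and> (\<Sum>j<n. p j) = 1"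

definition mechanism ::
  "(nat \<Rightarrow> 's1 set) \<Rightarrow> (nat \<Rightarrow> 's2 set) \<Rightarrow> (nat \<Rightarrow> 's1 \<Rightarrow> 's2 \<Rightarrow> nat \<Rightarrow> real) \<Rightarrow> bool" where
  "mechanism S1 S2 f \<longleftrightarrow>
     (\<forall>n\<ge>1. \<forall>s1\<in>S1 n. \<forall>s2\<in>S2 n. is_distrib n (f n s1 s2))"

definition payoff ::
  "(nat \<Rightarrow> 's1 \<Rightarrow> 's2 \<Rightarrow> nat \<Rightarrow> real) \<Rightarrow> nat \<Rightarrow> (nat \<Rightarrow> real \<times> real) \<Rightarrow> 's1 \<Rightarrow> 's2 \<Rightarrow> real \<times> real" where
  "payoff f n A s1 s2 = (\<Sum>j<n. f n s1 s2 j *\<^sub>R A j)"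

definition NEO ::
  "(nat \<Rightarrow> 's1 set) \<Rightarrow> (nat \<Rightarrow> 's2 set) \<Rightarrow> (nat \<Rightarrow> 's1 \<Rightarrow> 's2 \<Rightarrow> nat \<Rightarrow> real)
   \<Rightarrow> nat \<Rightarrow> (nat \<Rightarrow> real \<times> real) \<Rightarrow> (real \<times> real) set" where
  "NEO S1 S2 f n A =
     {payoff f n A s1 s2 | s1 s2. s1 \<in> S1 n \<and> s2 \<in> S2 n \<and>
        (\<forall>t1\<in>S1 n. fst (payoff f n A t1 s2) \<le> fst (payoff f n A s1 s2)) \<and>
        (\<forall>t2\<in>S2 n. snd (payoff f n A s1 t2) \<le> snd (payoff f n A s1 s2))}"

definition eps_pareto_eff :: "real \<Rightarrow> nat \<Rightarrow> (nat \<Rightarrow> real \<times> real) \<Rightarrow> real \<times> real \<Rightarrow> bool" where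
  "eps_pareto_eff eps n C x \<longleftrightarrow>
     \<not> (\<exists>l<n. fst (C l) > fst x + eps \<and> snd (C l) > snd x + eps)"

definition pareto_eff_all_eq ::
  "(nat \<Rightarrow> 's1 set) \<Rightarrow> (nat \<Rightarrow> 's2 set) \<Rightarrow> (nat \<Rightarrow> 's1 \<Rightarrow> 's2 \<Rightarrow> nat \<Rightarrow> real) \<Rightarrow> real \<Rightarrow> bool" where
  "pareto_eff_all_eq S1 S2 f eps \<longleftrightarrow>
     (\<forall>n C. collection n C \<longrightarrow> (\<forall>x\<in>NEO S1 S2 f n C. eps_pareto_eff eps n C x))"

definition eps_close_frontier :: "real \<Rightarrow> nat \<Rightarrow> (nat \<Rightarrow> real \<times> real) \<Rightarrow> real \<times> real \<Rightarrow> bool" where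
  "eps_close_frontier eps n A x \<longleftrightarrow>
     \<not> (\<exists>y\<in>convex hull (A ` {..<n}). fst y > fst x + eps \<and> snd y > snd x + eps)"

definition close_frontier_all_eq ::
  "(nat \<Rightarrow> 's1 set) \<Rightarrow> (nat \<Rightarrow> 's2 set) \<Rightarrow> (nat \<Rightarrow> 's1 \<Rightarrow> 's2 \<Rightarrow> nat \<Rightarrow> real) \<Rightarrow> real \<Rightarrow> bool" where
  "close_frontier_all_eq S1 S2 f eps \<longleftrightarrow>
     (\<forall>n A. collection n A \<longrightarrow> (\<forall>x\<in>NEO S1 S2 f n A. eps_close_frontier eps n A x))"

text \<open>k-uniform distributions over [n], represented by multisets of size k from [n].\<close>
definition kmsets :: "nat \<Rightarrow> nat \<Rightarrow> nat multiset set" where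
  "kmsets k n = {X. set_mset X \<subseteq> {..<n} \<and> size X = k}"

definition num_kun :: "nat \<Rightarrow> nat \<Rightarrow> nat" where
  "num_kun k n = card (kmsets k n)"

text \<open>k-UN(A), indexed via an enumeration e n : [num_kun k n] -> kmsets k n:
  entry l is E_{j ~ mu_l}[a^j] where mu_l is the uniform distribution over the multiset e n l.\<close>
definition kUN :: "nat \<Rightarrow> (nat \<Rightarrow> nat \<Rightarrow> nat multiset) \<Rightarrow> nat \<Rightarrow> (nat \<Rightarrow> real \<times> real) \<Rightarrow> nat \<Rightarrow> real \<times> real" where
  "kUN k e n A l = (\<Sum>j<n. (real (count (e n l) j) / real k) *\<^sub>R A j)"

text \<open>The mechanism M^k: signals of M for k-UN(A); M selects l, i.e. the k-uniform
  distribution e n l, from which the final index j is drawn.\<close>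
definition Mk_S1 :: "(nat \<Rightarrow> 's1 set) \<Rightarrow> nat \<Rightarrow> nat \<Rightarrow> 's1 set" where
  "Mk_S1 S1 k n = S1 (num_kun k n)"

definition Mk_S2 :: "(nat \<Rightarrow> 's2 set) \<Rightarrow> nat \<Rightarrow> nat \<Rightarrow> 's2 set" where
  "Mk_S2 S2 k n = S2 (num_kun k n)"

definition Mk_f ::
  "(nat \<Rightarrow> 's1 \<Rightarrow> 's2 \<Rightarrow> nat \<Rightarrow> real) \<Rightarrow> nat \<Rightarrow> (nat \<Rightarrow> nat \<Rightarrow> nat multiset)
   \<Rightarrow> nat \<Rightarrow> 's1 \<Rightarrow> 's2 \<Rightarrow> nat \<Rightarrow> real" where
  "Mk_f f k e n s1 s2 j =
     (\<Sum>l<num_kun k n. f (num_kun k n) s1 s2 l * (real (count (e n l) j) / real k))"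

end

theory Submission
  imports Defs
begin

lemma round3:
  fixes u1 u2 u3 :: real and k :: nat
  assumes u: "u1\<ge>0" "u2\<ge>0" "u3\<ge>0" "u1+u2+u3=1" and k: "k>0"
  shows "\<exists>c1 c2 c3::nat. c1+c2+c3 = k \<and> (\<forall>a1 a2 a3::real. 0\<le>a1 \<longrightarrow> a1\<le>1 \<longrightarrow> 0\<le>a2 \<longrightarrow> a2\<le>1 \<longrightarrow> 0\<le>a3 \<longrightarrow> a3\<le>1 \<longrightarrow>
      real k*(u1*a1+u2*a2+u3*a3) - 1 \<le> real c1*a1+real c2*a2+real c3*a3)"
proof -
  define g1 where "g1 = \<lfloor>real k*u1\<rfloor>"
  define g2 where "g2 = \<lfloor>real k*u2\<rfloor>"
  define g3 where "g3 = \<lfloor>real k*u3\<rfloor>"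
  have g1: "0 \<le> g1" "real_of_int g1 \<le> k*u1" "k*u1 < g1 + 1" using u unfolding g1_def by auto
  have g2: "0 \<le> g2" "real_of_int g2 \<le> k*u2" "k*u2 < g2 + 1" using u unfolding g2_def by auto
  have g3: "0 \<le> g3" "real_of_int g3 \<le> k*u3" "k*u3 < g3 + 1" using u unfolding g3_def by auto
  have ks: "real k*u1 + real k*u2 + real k*u3 = real k" using u(4) by (metis distrib_left mult.right_neutral)
  define r where "r = int k - (g1+g2+g3)"
  have rr: "real_of_int r = real k - (g1+g2+g3)" unfolding r_def by simp
  have r0: "0 \<le> r" using rr g1 g2 g3 ks by linarith
  have r2: "r \<le> 2" using rr g1 g2 g3 ks by linarith
  define e1 :: nat where "e1 = (if r \<ge> 1 then 1 else 0)"
  define e2 :: nat where "e2 = (if r \<ge> 2 then 1 else 0)"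
  have er: "int e1 + int e2 = r" unfolding e1_def e2_def using r0 r2 by auto
  let ?c1 = "nat g1 + e1" and ?c2 = "nat g2 + e2" and ?c3 = "nat g3"
  have c1: "real ?c1 = g1 + e1" using g1 by simp
  have c2: "real ?c2 = g2 + e2" using g2 by simp
  have c3: "real ?c3 = g3" using g3 by simp
  have sum: "?c1 + ?c2 + ?c3 = k" using er r_def g1 g2 g3 by linarith
  show ?thesis
  proof (intro exI conjI allI impI)
    show "?c1 + ?c2 + ?c3 = k" by (rule sum)
    fix a1 a2 a3 :: real
    assume a: "0\<le>a1" "a1\<le>1" "0\<le>a2" "a2\<le>1" "0\<le>a3" "a3\<le>1"
    define f1 where "f1 = k*u1 - g1"
    define f2 where "f2 = k*u2 - g2"
    define f3 where "f3 = k*u3 - g3"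
    have f: "0 \<le> f1" "f1 < 1" "0 \<le> f2" "f2 < 1" "0 \<le> f3" "f3 < 1"
      using g1 g2 g3 unfolding f1_def f2_def f3_def by auto
    have fs: "f1 + f2 + f3 = r" using rr ks unfolding f1_def f2_def f3_def by linarith
    have lhs: "real k*(u1*a1+u2*a2+u3*a3) = (g1+f1)*a1 + (g2+f2)*a2 + (g3+f3)*a3"
      unfolding f1_def f2_def f3_def by (simp add: algebra_simps)
    have p1: "f1*a1 \<le> f1" "(f1-1)*a1 \<le> 0" using f a by (auto simp: mult_nonpos_nonneg intro: mult_left_le)
    have p2: "f2*a2 \<le> f2" "(f2-1)*a2 \<le> 0" using f a by (auto simp: mult_nonpos_nonneg intro: mult_left_le)
    have p3: "f3*a3 \<le> f3" "(f3-1)*a3 \<le> 0" using f a by (auto simp: mult_nonpos_nonneg intro: mult_left_le)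
    have q: "0 \<le> f1*a1" "0 \<le> f2*a2" "0 \<le> f3*a3" using f a by auto
    have "r = 0 \<or> r = 1 \<or> r = 2" using r0 r2 by auto
    then show "real k*(u1*a1+u2*a2+u3*a3) - 1 \<le> real ?c1*a1+real ?c2*a2+real ?c3*a3"
    proof (elim disjE)
      assume "r = 0" then have "e1 = 0" "e2 = 0" unfolding e1_def e2_def by auto
      then show ?thesis unfolding lhs c1 c2 c3 using fs \<open>r=0\<close> p1 p2 p3 q f by (simp add: algebra_simps)
    next
      assume "r = 1" then have "e1 = 1" "e2 = 0" unfolding e1_def e2_def by auto
      then show ?thesis unfolding lhs c1 c2 c3 using fs \<open>r=1\<close> p1 p2 p3 q f by (simp add: algebra_simps)
    next
      assume "r = 2" then have "e1 = 1" "e2 = 1" unfolding e1_def e2_def by auto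
      then show ?thesis unfolding lhs c1 c2 c3 using fs \<open>r=2\<close> p1 p2 p3 q f by (simp add: algebra_simps)
    qed
  qed
qed

lemma kmsets_sum:
  assumes "X \<in> kmsets k n"
  shows "(\<Sum>j<n. count X j) = k"
proof -
  have sub: "set_mset X \<subseteq> {..<n}" and sz: "size X = k" using assms by (auto simp: kmsets_def)
  have "size X = sum (count X) (set_mset X)" by (rule size_multiset_overloaded_eq)
  also have "\<dots> = sum (count X) {..<n}"
    by (rule sum.mono_neutral_left) (use sub in \<open>auto simp: count_eq_zero_iff\<close>)
  finally show ?thesis using sz by simp
qed

lemma convex_box:
  fixes w :: "nat \<Rightarrow> real" and A :: "nat \<Rightarrow> real \<times> real"
  assumes w: "\<forall>j<n. w j \<ge> 0" and w1: "(\<Sum>j<n. w j) = 1" and b: "\<forall>j<n. A j \<in> {0..1} \<times> {0..1}"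
  shows "(\<Sum>j<n. w j *\<^sub>R A j) \<in> {0..1} \<times> {0..1}"
proof -
  have bj: "0 \<le> fst (A j) \<and> fst (A j) \<le> 1 \<and> 0 \<le> snd (A j) \<and> snd (A j) \<le> 1" if "j \<in> {..<n}" for j
    using b that by (auto simp: mem_Times_iff)
  have wj: "0 \<le> w j" if "j \<in> {..<n}" for j using w that by simp
  have "0 \<le> (\<Sum>j<n. w j * fst (A j))" by (rule sum_nonneg) (use bj wj in simp)
  moreover have "0 \<le> (\<Sum>j<n. w j * snd (A j))" by (rule sum_nonneg) (use bj wj in simp)
  moreover have "(\<Sum>j<n. w j * fst (A j)) \<le> (\<Sum>j<n. w j)"
    by (rule sum_mono) (use bj wj in \<open>simp add: mult_left_le\<close>)
  moreover have "(\<Sum>j<n. w j * snd (A j)) \<le> (\<Sum>j<n. w j)"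
    by (rule sum_mono) (use bj wj in \<open>simp add: mult_left_le\<close>)
  ultimately show ?thesis using w1 by (simp add: mem_Times_iff fst_sum snd_sum)
qed

lemma approx:
  fixes A :: "nat \<Rightarrow> real \<times> real"
  assumes col: "collection n A" and k: "k > 0" and y: "y \<in> convex hull (A ` {..<n})"
  shows "\<exists>X\<in>kmsets k n. fst y - 1 / real k \<le> fst (\<Sum>j<n. (real (count X j) / real k) *\<^sub>R A j)
           \<and> snd y - 1 / real k \<le> snd (\<Sum>j<n. (real (count X j) / real k) *\<^sub>R A j)"
proof -
  obtain S where S: "finite S" "S \<subseteq> A ` {..<n}" "card S \<le> DIM(real \<times> real) + 1" "y \<in> convex hull S"
  proof -
    have "y \<in> {x. \<exists>S. finite S \<and> S \<subseteq> A ` {..<n} \<and> card S \<le> DIM(real \<times> real) + 1 \<and> x \<in> convex hull S}"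
      using y by (simp only: caratheodory[of "A ` {..<n}", symmetric])
    then show ?thesis using that by (simp only: mem_Collect_eq) metis
  qed
  have c3: "card S \<le> 3" using S(3) by simp
  have "S \<noteq> {}" using S(4) by auto
  then obtain a0 where a0: "a0 \<in> S" by auto
  have "\<exists>a1 a2 a3. S \<subseteq> {a1,a2,a3} \<and> a1 \<in> S \<and> a2 \<in> S \<and> a3 \<in> S"
  proof (cases "card S = 1")
    case True then obtain a where "S = {a}" using card_1_singletonE by blast
    then show ?thesis by (intro exI[of _ a]) simp
  next
    case False
    show ?thesis
    proof (cases "card S = 2")
      case True then obtain a b where "S = {a,b}" by (meson card_2_iff)
      then show ?thesis by (intro exI[of _ a] exI[of _ b]) simp
    next
      case False2: False
      have "card S \<noteq> 0" using S(1) \<open>S \<noteq> {}\<close> by simp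
      then have "card S = 3" using c3 False False2 by linarith
      then obtain a b c where "S = {a,b,c}" by (meson card_3_iff)
      then show ?thesis by (intro exI[of _ a] exI[of _ b] exI[of _ c]) simp
    qed
  qed
  then obtain a1 a2 a3 where aa: "S \<subseteq> {a1,a2,a3}" "a1 \<in> S" "a2 \<in> S" "a3 \<in> S" by blast
  have "y \<in> convex hull {a1,a2,a3}" using hull_mono[OF aa(1)] S(4) by (rule subsetD)
  then obtain u1 u2 u3 where u: "0 \<le> u1" "0 \<le> u2" "0 \<le> u3" "u1+u2+u3 = 1"
      and yu: "y = u1 *\<^sub>R a1 + u2 *\<^sub>R a2 + u3 *\<^sub>R a3"
    unfolding convex_hull_3 mem_Collect_eq by metis
  obtain j1 j2 j3 where j: "j1 < n" "j2 < n" "j3 < n" "a1 = A j1" "a2 = A j2" "a3 = A j3"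
  proof -
    have "a1 \<in> A ` {..<n}" "a2 \<in> A ` {..<n}" "a3 \<in> A ` {..<n}" using aa S(2) by (auto simp only: subset_iff)
    then show ?thesis using that by (metis imageE lessThan_iff)
  qed
  have box: "\<forall>j<n. A j \<in> {0..1} \<times> {0..1}" using col by (simp add: collection_def)
  obtain c1 c2 c3 where cs: "c1+c2+c3 = k" and
    cb: "\<And>a1 a2 a3::real. 0\<le>a1 \<Longrightarrow> a1\<le>1 \<Longrightarrow> 0\<le>a2 \<Longrightarrow> a2\<le>1 \<Longrightarrow> 0\<le>a3 \<Longrightarrow> a3\<le>1 \<Longrightarrow>
      real k*(u1*a1+u2*a2+u3*a3) - 1 \<le> real c1*a1+real c2*a2+real c3*a3"
    using round3[OF u k] by blast
  define X where "X = replicate_mset c1 j1 + replicate_mset c2 j2 + replicate_mset c3 j3"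
  have Xk: "X \<in> kmsets k n" using cs j unfolding X_def kmsets_def by auto
  have cnt: "\<And>j. (real (count X j) / real k) *\<^sub>R A j = (if j = j1 then (real c1 / real k) *\<^sub>R A j1 else 0)
      + (if j = j2 then (real c2 / real k) *\<^sub>R A j2 else 0) + (if j = j3 then (real c3 / real k) *\<^sub>R A j3 else 0)"
    unfolding X_def by (simp add: add_divide_distrib scaleR_add_left)
  have "(\<Sum>j<n. (real (count X j) / real k) *\<^sub>R A j)
      = (\<Sum>j<n. (if j = j1 then (real c1 / real k) *\<^sub>R A j1 else 0))
      + (\<Sum>j<n. (if j = j2 then (real c2 / real k) *\<^sub>R A j2 else 0))
      + (\<Sum>j<n. (if j = j3 then (real c3 / real k) *\<^sub>R A j3 else 0))"
    unfolding cnt by (simp add: sum.distrib)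
  also have "\<dots> = (real c1 / real k) *\<^sub>R A j1 + (real c2 / real k) *\<^sub>R A j2 + (real c3 / real k) *\<^sub>R A j3"
    using j by simp
  finally have eq: "(\<Sum>j<n. (real (count X j) / real k) *\<^sub>R A j) = (real c1 / real k) *\<^sub>R A j1 + (real c2 / real k) *\<^sub>R A j2 + (real c3 / real k) *\<^sub>R A j3" .
  have kp: "real k > 0" using k by simp
  have B: "\<And>j. j < n \<Longrightarrow> 0 \<le> fst (A j) \<and> fst (A j) \<le> 1 \<and> 0 \<le> snd (A j) \<and> snd (A j) \<le> 1"
    using box by (auto simp: mem_Times_iff)
  have F: "real k*(u1* fst (A j1)+u2* fst (A j2)+u3* fst (A j3)) - 1 \<le> real c1* fst (A j1)+real c2* fst (A j2)+real c3* fst (A j3)"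
    using B[OF j(1)] B[OF j(2)] B[OF j(3)] by (intro cb) auto
  have G: "real k*(u1* snd (A j1)+u2* snd (A j2)+u3* snd (A j3)) - 1 \<le> real c1* snd (A j1)+real c2* snd (A j2)+real c3* snd (A j3)"
    using B[OF j(1)] B[OF j(2)] B[OF j(3)] by (intro cb) auto
  have "fst y - 1 / real k \<le> fst (\<Sum>j<n. (real (count X j) / real k) *\<^sub>R A j)"
  proof -
    have "fst y - 1 / real k = (real k*(u1* fst (A j1)+u2* fst (A j2)+u3* fst (A j3)) - 1) / real k"
      using kp by (simp add: yu j field_simps)
    also have "\<dots> \<le> (real c1* fst (A j1)+real c2* fst (A j2)+real c3* fst (A j3)) / real k"
      using F kp by (simp add: divide_right_mono)
    also have "\<dots> = fst (\<Sum>j<n. (real (count X j) / real k) *\<^sub>R A j)"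
      unfolding eq by (simp add: add_divide_distrib)
    finally show ?thesis .
  qed
  moreover have "snd y - 1 / real k \<le> snd (\<Sum>j<n. (real (count X j) / real k) *\<^sub>R A j)"
  proof -
    have "snd y - 1 / real k = (real k*(u1* snd (A j1)+u2* snd (A j2)+u3* snd (A j3)) - 1) / real k"
      using kp by (simp add: yu j field_simps)
    also have "\<dots> \<le> (real c1* snd (A j1)+real c2* snd (A j2)+real c3* snd (A j3)) / real k"
      using G kp by (simp add: divide_right_mono)
    also have "\<dots> = snd (\<Sum>j<n. (real (count X j) / real k) *\<^sub>R A j)"
      unfolding eq by (simp add: add_divide_distrib)
    finally show ?thesis .
  qed
  ultimately show ?thesis using Xk by blast
qed

theorem proposition4:
  fixes S1 :: "nat \<Rightarrow> 's1 set" and S2 :: "nat \<Rightarrow> 's2 set"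
    and f :: "nat \<Rightarrow> 's1 \<Rightarrow> 's2 \<Rightarrow> nat \<Rightarrow> real"
    and \<delta> :: real and k :: nat and e :: "nat \<Rightarrow> nat \<Rightarrow> nat multiset"
  assumes "mechanism S1 S2 f"
    and "pareto_eff_all_eq S1 S2 f \<delta>"
    and "k > 0"
    and "\<forall>n. bij_betw (e n) {..<num_kun k n} (kmsets k n)"
  shows "close_frontier_all_eq (Mk_S1 S1 k) (Mk_S2 S2 k) (Mk_f f k e) (\<delta> + 1 / real k)"
  unfolding close_frontier_all_eq_def
proof (intro allI impI ballI)
  fix n A x
  assume col: "collection n A" and x: "x \<in> NEO (Mk_S1 S1 k) (Mk_S2 S2 k) (Mk_f f k e) n A"
  define N where "N = num_kun k n"
  define C where "C = kUN k e n A"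
  have bij: "bij_betw (e n) {..<N} (kmsets k n)" using assms(4) unfolding N_def by blast
  have pay: "payoff (Mk_f f k e) n A s1 s2 = payoff f N C s1 s2" for s1 s2
  proof -
    have "payoff (Mk_f f k e) n A s1 s2
        = (\<Sum>j<n. \<Sum>l<N. (f N s1 s2 l * (real (count (e n l) j) / real k)) *\<^sub>R A j)"
      unfolding payoff_def Mk_f_def N_def by (simp add: scaleR_sum_left)
    also have "\<dots> = (\<Sum>l<N. \<Sum>j<n. f N s1 s2 l *\<^sub>R ((real (count (e n l) j) / real k) *\<^sub>R A j))"
      by (subst sum.swap) simp
    also have "\<dots> = payoff f N C s1 s2"
      unfolding payoff_def C_def kUN_def by (simp add: scaleR_sum_right)
    finally show ?thesis .
  qed
  have xN: "x \<in> NEO S1 S2 f N C"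
    using x unfolding NEO_def Mk_S1_def Mk_S2_def pay N_def[symmetric] by blast
  have n1: "n \<ge> 1" using col by (simp add: collection_def)
  have "replicate_mset k 0 \<in> kmsets k n" using n1 by (simp add: kmsets_def)
  moreover have "e n ` {..<N} = kmsets k n" using bij by (rule bij_betw_imp_surj_on)
  ultimately have "{..<N} \<noteq> {}" by auto
  then have N1: "N \<ge> 1" by auto
  have Cl: "C l = (\<Sum>j<n. (real (count (e n l) j) / real k) *\<^sub>R A j)" for l
    unfolding C_def kUN_def by simp
  have box: "\<forall>j<n. A j \<in> {0..1} \<times> {0..1}" using col by (simp add: collection_def)
  have colC: "collection N C"
    unfolding collection_def
  proof (intro conjI allI impI)
    show "1 \<le> N" by (rule N1)
    fix l assume l: "l < N"
    have X: "e n l \<in> kmsets k n" using bij l by (auto dest: bij_betwE)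
    have "(\<Sum>j<n. real (count (e n l) j) / real k) = real (\<Sum>j<n. count (e n l) j) / real k"
      by (simp add: sum_divide_distrib)
    also have "\<dots> = 1" using kmsets_sum[OF X] assms(3) by simp
    finally have s1: "(\<Sum>j<n. real (count (e n l) j) / real k) = 1" .
    show "C l \<in> {0..1} \<times> {0..1}" unfolding Cl
      by (rule convex_box) (use s1 box in auto)
  qed
  have pe: "eps_pareto_eff \<delta> N C x" using assms(2) colC xN unfolding pareto_eff_all_eq_def by blast
  show "eps_close_frontier (\<delta> + 1 / real k) n A x"
    unfolding eps_close_frontier_def
  proof
    assume "\<exists>y\<in>convex hull (A ` {..<n}). fst x + (\<delta> + 1 / real k) < fst y \<and> snd x + (\<delta> + 1 / real k) < snd y"
    then obtain y where y: "y \<in> convex hull (A ` {..<n})" "fst x + (\<delta> + 1 / real k) < fst y"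
      "snd x + (\<delta> + 1 / real k) < snd y" by blast
    obtain X where X: "X \<in> kmsets k n" "fst y - 1 / real k \<le> fst (\<Sum>j<n. (real (count X j) / real k) *\<^sub>R A j)"
      "snd y - 1 / real k \<le> snd (\<Sum>j<n. (real (count X j) / real k) *\<^sub>R A j)"
      using approx[OF col assms(3) y(1)] by blast
    obtain l where l: "l < N" "e n l = X" using X(1) \<open>e n ` {..<N} = kmsets k n\<close> by (metis imageE lessThan_iff)
    have "fst (C l) > fst x + \<delta>" "snd (C l) > snd x + \<delta>" using X(2,3) y(2,3) unfolding Cl l(2) by linarith+
    then show False using pe l(1) unfolding eps_pareto_eff_def by blast
  qed
qed

end
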